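(* Let $L$ be an $R_0$-algebra and $k\in[0,1)$. If $\mu$ is an $(\in,\in\vee q_k)$-fuzzy fated filter of $L$, then for every $t\in(\tfrac{1-k}{2},1]$ the set $Q_k(\mu;t)=\{x\in L\mid \mu(x)+t+k>1\}$ is either empty or a fated filter of $L$.
   Context: An $R_0$-algebra is a bounded distributive lattice $(L,\wedge,\vee,0,1)$ with an order-reversing involution $\neg$ and a binary operation $\to$ such that for all $x,y,z\in L$: $x\to y=\neg y\to\neg x$; $1\to x=x$; $(y\to z)\wedge((x\to y)\to(x\to z))=y\to z$; $x\to(y\to z)=y\to(x\to z)$; $x\to(y\vee z)=(x\to y)\vee(x\to z)$; $(x\to y)\vee((x\to y)\to(\neg x\vee y))=1$. A fated filter of $L$ is a nonempty subset $A\subseteq L$ with $1\in A$ such that for all $x,y\in L$ and $a\in A$, $a\to((x\to y)\to x)\in A$ implies $x\in A$. For $x\in L$, $t\in(0,1]$ and a fuzzy subset $\mu:L\to[0,1]$: $x_t\in\mu$ iff $\mu(x)\ge t$; $x_t\,q_k\,\mu$ iff $\mu(x)+t+k>1$; $x_t\in\vee q_k\,\mu$ iff $x_t\in\mu$ or $x_t\,q_k\,\mu$. $\mu$ is an $(\in,\in\vee q_k)$-fuzzy fated filter of $L$ if (1) for all $x\in L$, $t\in(0,1]$: $x_t\in\mu\Rightarrow 1_t\in\vee q_k\,\mu$; and (2) for all $x,a,y\in L$, $t,s\in(0,1]$: if $(a\to((x\to y)\to x))_t\in\mu$ and $a_s\in\mu$ then $x_{\min\{t,s\}}\in\vee q_k\,\mu$.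 *)

theory Defs
  imports Complex_Main
begin

definition R0_algebra :: "('a::{bounded_lattice,distrib_lattice} \<Rightarrow> 'a) \<Rightarrow> ('a \<Rightarrow> 'a \<Rightarrow> 'a) \<Rightarrow> bool" where
  "R0_algebra neg imp \<longleftrightarrow>
     (\<forall>x. neg (neg x) = x) \<and>
     (\<forall>x y. x \<le> y \<longrightarrow> neg y \<le> neg x) \<and>
     (\<forall>x y. imp x y = imp (neg y) (neg x)) \<and>
     (\<forall>x. imp top x = x) \<and>
     (\<forall>x y z. inf (imp y z) (imp (imp x y) (imp x z)) = imp y z) \<and>
     (\<forall>x y z. imp x (imp y z) = imp y (imp x z)) \<and>
     (\<forall>x y z. imp x (sup y z) = sup (imp x y) (imp x z)) \<and>
     (\<forall>x y. sup (imp x y) (imp (imp x y) (sup (neg x) y)) = top)"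

definition fated_filter :: "('a::bounded_lattice \<Rightarrow> 'a \<Rightarrow> 'a) \<Rightarrow> 'a set \<Rightarrow> bool" where
  "fated_filter imp A \<longleftrightarrow> A \<noteq> {} \<and> top \<in> A \<and>
     (\<forall>x y a. a \<in> A \<longrightarrow> imp a (imp (imp x y) x) \<in> A \<longrightarrow> x \<in> A)"

definition fz_in :: "'a \<Rightarrow> real \<Rightarrow> ('a \<Rightarrow> real) \<Rightarrow> bool" where
  "fz_in x t \<mu> \<longleftrightarrow> \<mu> x \<ge> t"

definition fz_q :: "real \<Rightarrow> 'a \<Rightarrow> real \<Rightarrow> ('a \<Rightarrow> real) \<Rightarrow> bool" where
  "fz_q k x t \<mu> \<longleftrightarrow> \<mu> x + t + k > 1"

definition fz_in_or_q :: "real \<Rightarrow> 'a \<Rightarrow> real \<Rightarrow> ('a \<Rightarrow> real) \<Rightarrow> bool" where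
  "fz_in_or_q k x t \<mu> \<longleftrightarrow> fz_in x t \<mu> \<or> fz_q k x t \<mu>"

definition fuzzy_subset :: "('a \<Rightarrow> real) \<Rightarrow> bool" where
  "fuzzy_subset \<mu> \<longleftrightarrow> (\<forall>x. 0 \<le> \<mu> x \<and> \<mu> x \<le> 1)"

definition in_inq_fuzzy_fated_filter ::
  "real \<Rightarrow> ('a::bounded_lattice \<Rightarrow> 'a \<Rightarrow> 'a) \<Rightarrow> ('a \<Rightarrow> real) \<Rightarrow> bool" where
  "in_inq_fuzzy_fated_filter k imp \<mu> \<longleftrightarrow> fuzzy_subset \<mu> \<and>
     (\<forall>x t. 0 < t \<and> t \<le> 1 \<longrightarrow> fz_in x t \<mu> \<longrightarrow> fz_in_or_q k top t \<mu>) \<and>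
     (\<forall>x a y t s. 0 < t \<and> t \<le> 1 \<and> 0 < s \<and> s \<le> 1 \<longrightarrow>
        fz_in (imp a (imp (imp x y) x)) t \<mu> \<longrightarrow> fz_in a s \<mu> \<longrightarrow>
        fz_in_or_q k x (min t s) \<mu>)"

definition Q_set :: "real \<Rightarrow> ('a \<Rightarrow> real) \<Rightarrow> real \<Rightarrow> 'a set" where
  "Q_set k \<mu> t = {x. fz_q k x t \<mu>}"

end

theory Submission
  imports Defs
begin

lemma key:
  fixes k s m :: real
  assumes "k < 1" "0 < s" "s \<le> (1-k)/2" "m \<ge> s \<or> m + s + k > 1"
  shows "m \<ge> s"
proof -
  have "2*s \<le> 1-k" using assms(3) by (simp add: field_simps)
  then show ?thesis using assms by linarith
qed

theorem theorem3p20: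
  fixes neg :: "'a::{bounded_lattice,distrib_lattice} \<Rightarrow> 'a"
    and imp :: "'a \<Rightarrow> 'a \<Rightarrow> 'a"
    and \<mu> :: "'a \<Rightarrow> real" and k :: real
  assumes "R0_algebra neg imp"
    and "0 \<le> k" and "k < 1"
    and "in_inq_fuzzy_fated_filter k imp \<mu>"
  shows "\<forall>t. (1 - k) / 2 < t \<and> t \<le> 1 \<longrightarrow>
           Q_set k \<mu> t = {} \<or> fated_filter imp (Q_set k \<mu> t)"
proof (intro allI impI)
  fix t assume t: "(1 - k) / 2 < t \<and> t \<le> 1"
  have fs: "\<And>x. 0 \<le> \<mu> x \<and> \<mu> x \<le> 1" using assms(4)
    unfolding in_inq_fuzzy_fated_filter_def fuzzy_subset_def by blast
  have c1: "\<And>x s. 0 < s \<Longrightarrow> s \<le> 1 \<Longrightarrow> \<mu> x \<ge> s \<Longrightarrow> \<mu> top \<ge> s \<or> \<mu> top + s + k > 1"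
    using assms(4) unfolding in_inq_fuzzy_fated_filter_def fz_in_or_q_def fz_in_def fz_q_def
    by blast
  have c2: "\<And>x a y s. 0 < s \<Longrightarrow> s \<le> 1 \<Longrightarrow> \<mu> (imp a (imp (imp x y) x)) \<ge> s \<Longrightarrow> \<mu> a \<ge> s
      \<Longrightarrow> \<mu> x \<ge> s \<or> \<mu> x + s + k > 1"
  proof -
    fix x a y s assume h: "0 < (s::real)" "s \<le> 1" "\<mu> (imp a (imp (imp x y) x)) \<ge> s" "\<mu> a \<ge> s"
    have "fz_in_or_q k x (min s s) \<mu>"
      using assms(4) h unfolding in_inq_fuzzy_fated_filter_def fz_in_def by blast
    then show "\<mu> x \<ge> s \<or> \<mu> x + s + k > 1" by (simp add: fz_in_or_q_def fz_in_def fz_q_def)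
  qed
  show "Q_set k \<mu> t = {} \<or> fated_filter imp (Q_set k \<mu> t)"
  proof (cases "Q_set k \<mu> t = {}")
    case True then show ?thesis by simp
  next
    case False
    then obtain x0 where x0: "\<mu> x0 + t + k > 1" unfolding Q_set_def fz_q_def by auto
    define h where "h = (1-k)/2"
    have hh: "2*h = 1-k" "h > 0" using assms(3) by (simp_all add: h_def)
    have th: "t > h" using t by (simp add: h_def)
    have top: "\<mu> top + t + k > 1"
    proof (cases "\<mu> x0 = 0")
      case True then show ?thesis using x0 fs[of top] by linarith
    next
      case False
      have p: "\<mu> x0 > 0" using False fs[of x0] by linarith
      show ?thesis
      proof (cases "\<mu> x0 \<le> h")
        case True
        have "\<mu> top \<ge> \<mu> x0 \<or> \<mu> top + \<mu> x0 + k > 1"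
          using c1[OF p _ order.refl] fs[of x0] by simp
        then show ?thesis using x0 True hh by linarith
      next
        case False
        have "\<mu> top \<ge> h \<or> \<mu> top + h + k > 1"
          proof (rule c1[OF hh(2)]) show "h \<le> 1" using hh assms(2) by linarith show "h \<le> \<mu> x0" using False by linarith qed
        then show ?thesis using th hh by linarith
      qed
    qed
    have mp: "x \<in> Q_set k \<mu> t" if a: "a \<in> Q_set k \<mu> t"
        and w: "imp a (imp (imp x y) x) \<in> Q_set k \<mu> t" for x y a
    proof -
      let ?w = "imp a (imp (imp x y) x)"
      have ha: "\<mu> a + t + k > 1" and hw: "\<mu> ?w + t + k > 1"
        using a w unfolding Q_set_def fz_q_def by auto
      have "\<mu> x + t + k > 1"
      proof (cases "\<mu> a = 0 \<or> \<mu> ?w = 0")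
        case True then have "t + k > 1" using ha hw by auto
        then show ?thesis using fs[of x] by linarith
      next
        case False
        define s where "s = min (min (\<mu> a) (\<mu> ?w)) h"
        have pa: "\<mu> a > 0" "\<mu> ?w > 0" using False fs[of a] fs[of ?w] by auto
        have s3: "s \<le> h" "s \<le> \<mu> a" "s \<le> \<mu> ?w" unfolding s_def by auto
        have s1: "0 < s" using pa hh(2) unfolding s_def by simp
        have s5: "s = \<mu> a \<or> s = \<mu> ?w \<or> s = h" unfolding s_def min_def by auto
        have "\<mu> x \<ge> s \<or> \<mu> x + s + k > 1"
          proof (rule c2[OF s1 _ s3(3) s3(2)]) show "s \<le> 1" using s3(1) hh assms(2) by linarith qed
        then have "\<mu> x \<ge> s" using s3(1) hh by linarith
        then show ?thesis using s5 ha hw th hh by auto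
      qed
      then show ?thesis unfolding Q_set_def fz_q_def by simp
    qed
    have "top \<in> Q_set k \<mu> t" using top unfolding Q_set_def fz_q_def by simp
    then show ?thesis unfolding fated_filter_def using mp by blast
  qed
qed

end
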